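(* Let $X\in\{0,1\}^{n\times m}$ and $X'\in\{0,1\}^{n\times m}$ be independent, each following the rank-one model with the same column parameter $\mathbf v\in[c,C]^m$ and row parameters $\mathbf u\in[c,C]^n$ and $\mathbf u'\in[c,C]^n$ respectively. Let $\hat{\mathbf v}$ be a leading right singular vector of $X'$ (sign chosen so that $\langle\hat{\mathbf v},\mathbf v\rangle\ge0$) and set $\hat u_i=X_{i,\cdot}\,\hat{\mathbf v}/(\|\hat{\mathbf v}\|\,\|\mathbf v\|)$, where $X_{i,\cdot}$ is the $i$-th row of $X$. Then for every $i$ and every $0<\epsilon<1$ satisfying $\epsilon^2\min(m,n)>(6C_3/c)^2\log(m+n)$, $$\Pr\big(|\hat u_i-u_i|>\epsilon\big)\le (m+n+2)\exp\!\left(-C_4\min(m,n)\,\epsilon^2\right).$$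
   Context: Rank-one model: fix constants $0<c<C<1$. For vectors $\mathbf u\in[c,C]^n$ and $\mathbf v\in[c,C]^m$, a random matrix $X\in\{0,1\}^{n\times m}$ follows the rank-one model if its entries are independent with $X_{i,j}\sim\mathrm{Bernoulli}(u_iv_j)$, so $\mathbb E X=\mathbf u\mathbf v^\top$. All norms are Euclidean. Constants: $C_2=c^4/48$, $C_3=4/c^4+30\sqrt2$, $C_4=c^2\min(1/18,\,C_2/9)$. *)

theory Defs
  imports "HOL-Probability.Probability"
begin

text \<open>Matrices in {0,1}^{n x m} are represented as functions (nat \<times> nat) \<Rightarrow> bool,
  equal to False outside {0..<n} \<times> {0..<m}; real vectors in R^m as nat \<Rightarrow> real,
  only the entries with index < m being relevant.\<close>

definition const_C2 :: "real \<Rightarrow> real" where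
  "const_C2 c = c ^ 4 / 48"

definition const_C3 :: "real \<Rightarrow> real" where
  "const_C3 c = 4 / c ^ 4 + 30 * sqrt 2"

definition const_C4 :: "real \<Rightarrow> real" where
  "const_C4 c = c ^ 2 * min (1 / 18) (const_C2 c / 9)"

definition rank_one_pmf :: "nat \<Rightarrow> nat \<Rightarrow> (nat \<Rightarrow> real) \<Rightarrow> (nat \<Rightarrow> real) \<Rightarrow> (nat \<times> nat \<Rightarrow> bool) pmf" where
  "rank_one_pmf n m u v = Pi_pmf ({0..<n} \<times> {0..<m}) False (\<lambda>(i, j). bernoulli_pmf (u i * v j))"

definition vec_inner :: "nat \<Rightarrow> (nat \<Rightarrow> real) \<Rightarrow> (nat \<Rightarrow> real) \<Rightarrow> real" where
  "vec_inner m a b = (\<Sum>j<m. a j * b j)"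

definition vec_norm :: "nat \<Rightarrow> (nat \<Rightarrow> real) \<Rightarrow> real" where
  "vec_norm m a = sqrt (\<Sum>j<m. (a j)\<^sup>2)"

definition gram_mult :: "nat \<Rightarrow> nat \<Rightarrow> (nat \<Rightarrow> nat \<Rightarrow> real) \<Rightarrow> (nat \<Rightarrow> real) \<Rightarrow> nat \<Rightarrow> real" where
  "gram_mult n m A y = (\<lambda>j. \<Sum>i<n. A i j * (\<Sum>k<m. A i k * y k))"

text \<open>w is a leading right singular vector of A: a (nonzero) eigenvector of A^T A
  for its largest eigenvalue sigma_1(A)^2.\<close>
definition leading_right_sv :: "nat \<Rightarrow> nat \<Rightarrow> (nat \<Rightarrow> nat \<Rightarrow> real) \<Rightarrow> (nat \<Rightarrow> real) \<Rightarrow> bool" where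
  "leading_right_sv n m A w \<longleftrightarrow>
     (\<exists>j<m. w j \<noteq> 0) \<and>
     (\<exists>lam. (\<forall>j<m. gram_mult n m A w j = lam * w j) \<and>
          (\<forall>\<mu> y. (\<exists>j<m. y j \<noteq> 0) \<and> (\<forall>j<m. gram_mult n m A y j = \<mu> * y j) \<longrightarrow> \<mu> \<le> lam))"

definition real_mat :: "(nat \<times> nat \<Rightarrow> bool) \<Rightarrow> nat \<Rightarrow> nat \<Rightarrow> real" where
  "real_mat X = (\<lambda>i j. of_bool (X (i, j)))"

end

theory Submission
  imports Defs
begin


lemma hoeff_pi:
  fixes I :: "'a set" and q a :: "'a \<Rightarrow> real" and dflt :: bool
  assumes fin: "finite I" and q: "\<forall>k\<in>I. q k \<in> {0..1}" and t: "t > 0" and sig: "\<sigma> > 0"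
    and asum: "(\<Sum>k\<in>I. (a k)\<^sup>2) \<le> \<sigma>"
  shows "measure_pmf.prob (Pi_pmf I dflt (\<lambda>k. bernoulli_pmf (q k)))
           {f. \<bar>\<Sum>k\<in>I. a k * (of_bool (f k) - q k)\<bar> \<ge> t} \<le> 2 * exp (-2 * t\<^sup>2 / \<sigma>)"
proof (cases "(\<Sum>k\<in>I. (a k)\<^sup>2) = 0")
  case True
  then have "\<forall>k\<in>I. a k = 0" using fin by (subst (asm) sum_nonneg_eq_0_iff) auto
  then have "{f. \<bar>\<Sum>k\<in>I. a k * (of_bool (f k) - q k)\<bar> \<ge> t} = {}" using t by auto
  then show ?thesis by simp
next
  case False
  define P where "P = Pi_pmf I dflt (\<lambda>k. bernoulli_pmf (q k))"
  define lo where "lo = (\<lambda>k. min (a k * (- q k)) (a k * (1 - q k)))"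
  define hi where "hi = (\<lambda>k. max (a k * (- q k)) (a k * (1 - q k)))"
  have hl: "(hi k - lo k)\<^sup>2 = (a k)\<^sup>2" for k
    unfolding hi_def lo_def by (cases "a k \<ge> 0") (auto simp: max_def min_def algebra_simps power2_eq_square mult_left_mono_neg)
  interpret Hoeffding_ineq "measure_pmf P" I "\<lambda>k f. a k * (of_bool (f k) - q k)" lo hi
           "\<Sum>k\<in>I. measure_pmf.expectation P (\<lambda>f. a k * (of_bool (f k) - q k))"
  proof unfold_locales
    show "finite I" by fact
    show "prob_space.indep_vars (measure_pmf P) (\<lambda>_. borel) (\<lambda>k f. a k * (of_bool (f k) - q k)) I"
      unfolding P_def
      by (intro prob_space.indep_vars_compose2[OF _ indep_vars_Pi_pmf])
         (auto simp: measure_pmf.prob_space_axioms fin)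
    show "AE x in measure_pmf P. a i * (of_bool (x i) - q i) \<in> {lo i..hi i}" if "i \<in> I" for i
      by (intro AE_I2) (auto simp: lo_def hi_def)
  qed simp
  have e0: "measure_pmf.expectation P (\<lambda>f. a k * (of_bool (f k) - q k)) = 0" if k: "k \<in> I" for k
  proof -
    have "measure_pmf.expectation P (\<lambda>f. a k * (of_bool (f k) - q k)) =
          measure_pmf.expectation (map_pmf (\<lambda>f. f k) P) (\<lambda>b. a k * (of_bool b - q k))"
      by simp
    also have "map_pmf (\<lambda>f. f k) P = bernoulli_pmf (q k)"
      using k fin by (simp add: P_def Pi_pmf_component)
    finally show ?thesis using q k by (simp add: algebra_simps)
  qed
  have "(\<Sum>k\<in>I. measure_pmf.expectation P (\<lambda>f. a k * (of_bool (f k) - q k))) = 0"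
    by (intro sum.neutral ballI e0)
  moreover have "(\<Sum>k\<in>I. (hi k - lo k)\<^sup>2) = (\<Sum>k\<in>I. (a k)\<^sup>2)" by (simp add: hl)
  moreover have "(\<Sum>k\<in>I. (a k)\<^sup>2) > 0" using False by (simp add: sum_nonneg order_le_neq_trans)
  ultimately have "measure_pmf.prob P {x. \<bar>\<Sum>k\<in>I. a k * (of_bool (x k) - q k)\<bar> \<ge> t}
       \<le> 2 * exp (-2 * t\<^sup>2 / (\<Sum>k\<in>I. (a k)\<^sup>2))"
    using Hoeffding_ineq_abs_ge[of t] t by simp
  also have "\<dots> \<le> 2 * exp (-2 * t\<^sup>2 / \<sigma>)"
    using asum \<open>(\<Sum>k\<in>I. (a k)\<^sup>2) > 0\<close> t
    by (intro mult_left_mono exp_le_cancel_iff[THEN iffD2]) (auto intro!: divide_left_mono mult_pos_pos simp: )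
  finally show ?thesis by (simp add: P_def)
qed



definition mv :: "nat \<Rightarrow> (nat \<Rightarrow> nat \<Rightarrow> real) \<Rightarrow> (nat \<Rightarrow> real) \<Rightarrow> nat \<Rightarrow> real" where
  "mv m A y = (\<lambda>i. \<Sum>k<m. A i k * y k)"

definition qf :: "nat \<Rightarrow> nat \<Rightarrow> (nat \<Rightarrow> nat \<Rightarrow> real) \<Rightarrow> (nat \<Rightarrow> real) \<Rightarrow> real" where
  "qf n m A y = (\<Sum>i<n. (mv m A y i)\<^sup>2)"

lemma gram_quad:
  "(\<Sum>j<m. y j * gram_mult n m A z j) = (\<Sum>i<n. mv m A y i * mv m A z i)"
proof -
  have "(\<Sum>j<m. y j * gram_mult n m A z j) = (\<Sum>j<m. \<Sum>i<n. \<Sum>k<m. y j * A i j * (A i k * z k))"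
    unfolding gram_mult_def by (simp add: sum_distrib_left mult_ac)
  also have "\<dots> = (\<Sum>i<n. \<Sum>j<m. \<Sum>k<m. y j * A i j * (A i k * z k))"
    by (rule sum.swap)
  also have "\<dots> = (\<Sum>i<n. mv m A y i * mv m A z i)"
    unfolding mv_def by (simp add: sum_product mult_ac)
  finally show ?thesis .
qed

lemma quad_zero:
  fixes a b :: real
  assumes "\<And>t. a * t + b * t\<^sup>2 \<le> 0"
  shows "a = 0"
proof -
  define t where "t = a / (\<bar>b\<bar> + 1)"
  have pos: "\<bar>b\<bar> + 1 > 0" by simp
  have "a * t + b * t\<^sup>2 \<le> 0" by (rule assms)
  then have "(a * t + b * t\<^sup>2) * (\<bar>b\<bar> + 1)\<^sup>2 \<le> 0"
    by (simp add: mult_nonpos_nonneg)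
  also have "(a * t + b * t\<^sup>2) * (\<bar>b\<bar> + 1)\<^sup>2 = a * (t * (\<bar>b\<bar> + 1)) * (\<bar>b\<bar> + 1) + b * (t * (\<bar>b\<bar> + 1))\<^sup>2"
    by (simp add: algebra_simps power2_eq_square)
  also have "t * (\<bar>b\<bar> + 1) = a" using pos unfolding t_def by simp
  also have "a * a * (\<bar>b\<bar> + 1) + b * a\<^sup>2 = a\<^sup>2 * (\<bar>b\<bar> + b + 1)"
    by (simp add: algebra_simps power2_eq_square)
  finally have "a\<^sup>2 * (\<bar>b\<bar> + b + 1) \<le> 0" .
  moreover have "\<bar>b\<bar> + b + 1 > 0" by linarith
  ultimately have "a\<^sup>2 \<le> 0" by (simp add: mult_le_0_iff)
  then show ?thesis by simp
qed

lemma mv_restrict: "(\<And>j. j < m \<Longrightarrow> y j = y' j) \<Longrightarrow> mv m A y = mv m A y'"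
  unfolding mv_def by (auto intro!: sum.cong)

lemma mv_lin: "mv m A (\<lambda>j. z j + t * y j) i = mv m A z i + t * mv m A y i"
  unfolding mv_def by (simp add: algebra_simps sum.distrib sum_distrib_left)

lemma mv_scale: "mv m A (\<lambda>j. s * y j) i = s * mv m A y i"
  unfolding mv_def by (simp add: algebra_simps sum_distrib_left)

lemma qf_scale: "qf n m A (\<lambda>j. s * y j) = s\<^sup>2 * qf n m A y"
  unfolding qf_def by (simp add: mv_scale power_mult_distrib sum_distrib_left)

lemma compact_K:
  "compact (PiE UNIV (\<lambda>j. if j < m then {-1..1::real} else {0}) \<inter> {z::nat\<Rightarrow>real. (\<Sum>j<m. (z j)\<^sup>2) = 1})"
proof (rule compact_Int_closed)
  have "compactin (product_topology (\<lambda>_. euclidean) UNIV) (PiE UNIV (\<lambda>j. if j < m then {-1..1::real} else {0}))"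
    by (subst compactin_PiE) auto
  then show "compact (PiE UNIV (\<lambda>j. if j < m then {-1..1::real} else {0}))"
    by (simp add: euclidean_product_topology)
  have "continuous_on UNIV (\<lambda>z::nat\<Rightarrow>real. \<Sum>j<m. (z j)\<^sup>2)"
    by (intro continuous_intros continuous_on_product_coordinates)
  then show "closed {z::nat\<Rightarrow>real. (\<Sum>j<m. (z j)\<^sup>2) = 1}"
    using closed_Collect_eq[OF _ continuous_on_const] by blast
qed

lemma exists_top_eig:
  assumes m: "m > 0"
  shows "\<exists>z \<mu>. (\<exists>j<m. z j \<noteq> 0) \<and> (\<forall>j<m. gram_mult n m A z j = \<mu> * z j) \<and>
            (\<forall>y. vec_norm m y = 1 \<longrightarrow> qf n m A y \<le> \<mu>)"
proof -
  define K where "K = PiE UNIV (\<lambda>j. if j < m then {-1..1::real} else {0}) \<inter> {z. (\<Sum>j<m. (z j)\<^sup>2) = 1}"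
  have cK: "compact K" unfolding K_def by (rule compact_K)
  have "(\<Sum>j<m. (if j = 0 then 1 else 0::real)\<^sup>2) = (\<Sum>j<m. if j = 0 then 1 else 0::real)"
    by (intro sum.cong) auto
  also have "\<dots> = 1" using m by simp
  finally have e0: "(\<lambda>j. if j = 0 then 1 else 0::real) \<in> K"
    using m unfolding K_def by (auto simp: PiE_iff)
  have cont: "continuous_on K (qf n m A)"
    unfolding qf_def mv_def
    by (intro continuous_intros continuous_on_subset[OF continuous_on_product_coordinates]) auto
  obtain z0 where z0: "z0 \<in> K" and zmax: "\<And>y. y \<in> K \<Longrightarrow> qf n m A y \<le> qf n m A z0"
    using continuous_attains_sup[OF cK _ cont] e0 by blast
  define \<mu> where "\<mu> = qf n m A z0"
  define N where "N = (\<lambda>z::nat\<Rightarrow>real. \<Sum>j<m. (z j)\<^sup>2)"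
  have Nz0: "N z0 = 1" using z0 unfolding K_def N_def by auto
  have bound: "qf n m A z \<le> \<mu> * N z" for z
  proof (cases "N z = 0")
    case True
    then have "\<forall>j<m. z j = 0" unfolding N_def by (subst (asm) sum_nonneg_eq_0_iff) auto
    then have "mv m A z = mv m A (\<lambda>_. 0)" by (intro mv_restrict) auto
    then have "qf n m A z = qf n m A (\<lambda>_. 0)" unfolding qf_def by simp
    also have "\<dots> = 0" by (simp add: qf_def mv_def)
    finally have "qf n m A z = 0" .
    then show ?thesis using True by simp
  next
    case False
    have Npos: "N z > 0" using False unfolding N_def by (simp add: sum_nonneg order_le_neq_trans)
    define z' where "z' = (\<lambda>j. if j < m then z j / sqrt (N z) else 0)"
    have Nz': "(\<Sum>j<m. (z' j)\<^sup>2) = 1"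
      using Npos unfolding z'_def N_def by (simp add: power_divide sum_divide_distrib[symmetric])
    have zab: "\<bar>z' j\<bar> \<le> 1" if "j < m" for j
    proof -
      have "(z' j)\<^sup>2 \<le> (\<Sum>j<m. (z' j)\<^sup>2)"
        using that by (intro member_le_sum) auto
      then have "(z' j)\<^sup>2 \<le> 1\<^sup>2" using Nz' by simp
      then show ?thesis using abs_le_square_iff[of "z' j" 1] by simp
    qed
    have zin: "z' j \<in> (if j < m then {-1..1} else {0})" for j
    proof (cases "j < m")
      case True
      have "\<bar>z' j\<bar> \<le> 1" by (rule zab[OF True])
      then show ?thesis using True by (simp add: abs_le_iff)
    next
      case False
      then show ?thesis by (simp add: z'_def)
    qed
    have z'K: "z' \<in> K" unfolding K_def using Nz' zin by (auto simp: PiE_iff)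
    have "mv m A z' = mv m A (\<lambda>j. (1 / sqrt (N z)) * z j)" by (intro mv_restrict) (auto simp: z'_def)
    then have "qf n m A z' = (1 / sqrt (N z))\<^sup>2 * qf n m A z"
      using qf_scale unfolding qf_def by metis
    then have "qf n m A z' = qf n m A z / N z" using Npos by (simp add: power_divide)
    with zmax[OF z'K] have "qf n m A z / N z \<le> \<mu>" by (simp add: \<mu>_def)
    then show ?thesis using Npos by (simp add: divide_le_eq mult.commute)
  qed
  have foc: "(\<Sum>i<n. mv m A z0 i * mv m A y i) = \<mu> * (\<Sum>j<m. z0 j * y j)" for y
  proof -
    define B where "B = (\<Sum>i<n. mv m A z0 i * mv m A y i)"
    define C where "C = (\<Sum>j<m. z0 j * y j)"
    have qz: "2 * (B - \<mu> * C) * t + (qf n m A y - \<mu> * N y) * t\<^sup>2 \<le> 0" for t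
    proof -
      have q: "qf n m A (\<lambda>j. z0 j + t * y j) = \<mu> + 2 * t * B + t\<^sup>2 * qf n m A y"
        unfolding qf_def mv_lin \<mu>_def B_def
        by (simp add: power2_sum sum.distrib sum_distrib_left power_mult_distrib qf_def algebra_simps)
      have nn: "N (\<lambda>j. z0 j + t * y j) = 1 + 2 * t * C + t\<^sup>2 * N y"
        using Nz0 unfolding N_def C_def
        by (simp add: power2_sum sum.distrib sum_distrib_left power_mult_distrib algebra_simps)
      from bound[of "\<lambda>j. z0 j + t * y j"] q nn show ?thesis by (simp add: algebra_simps)
    qed
    have "2 * (B - \<mu> * C) = 0"
      using quad_zero[of "2 * (B - \<mu> * C)" "qf n m A y - \<mu> * N y"] qz by blast
    then show ?thesis unfolding B_def C_def by simp
  qed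
  define y where "y = (\<lambda>j. gram_mult n m A z0 j - \<mu> * z0 j)"
  have "(\<Sum>j<m. y j * gram_mult n m A z0 j) = \<mu> * (\<Sum>j<m. z0 j * y j)"
    using foc[of y] gram_quad[where y=y and z=z0 and A=A and n=n and m=m] by (simp add: mult.commute)
  then have "(\<Sum>j<m. (y j)\<^sup>2) = 0"
    unfolding y_def by (simp add: power2_eq_square algebra_simps sum_subtractf sum_distrib_left sum.distrib)
  then have "\<forall>j<m. y j = 0" by (subst (asm) sum_nonneg_eq_0_iff) auto
  then have eig: "\<forall>j<m. gram_mult n m A z0 j = \<mu> * z0 j" unfolding y_def by simp
  have nz: "\<exists>j<m. z0 j \<noteq> 0"
  proof (rule ccontr)
    assume "\<not> ?thesis"
    then have "N z0 = 0" unfolding N_def by simp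
    with Nz0 show False by simp
  qed
  have "qf n m A y \<le> \<mu>" if "vec_norm m y = 1" for y
  proof -
    have "N y = 1" using that unfolding vec_norm_def N_def by simp
    with bound[of y] show ?thesis by simp
  qed
  with eig nz show ?thesis by blast
qed



definition bil :: "nat \<Rightarrow> nat \<Rightarrow> (nat \<Rightarrow> nat \<Rightarrow> real) \<Rightarrow> (nat \<Rightarrow> real) \<Rightarrow> (nat \<Rightarrow> real) \<Rightarrow> real" where
  "bil n m F x y = (\<Sum>i<n. \<Sum>j<m. x i * F i j * y j)"

lemma vn_L2: "vec_norm m a = L2_set a {..<m}"
  by (simp add: vec_norm_def L2_set_def)

lemma vn_nonneg: "vec_norm m a \<ge> 0"
  by (simp add: vec_norm_def sum_nonneg)

lemma sum_abs_le: "(\<Sum>j<d. \<bar>x j\<bar>) \<le> sqrt (real d) * vec_norm d x"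
  using L2_set_mult_ineq[where f="\<lambda>_. 1::real" and A="{..<d}" and g=x]
  by (simp add: L2_set_constant vn_L2)

lemma bil_crude:
  assumes F: "\<forall>i<n. \<forall>j<m. \<bar>F i j\<bar> \<le> 1"
  shows "\<bar>bil n m F x y\<bar> \<le> (sqrt (real n) * vec_norm n x) * (sqrt (real m) * vec_norm m y)"
proof -
  have "\<bar>bil n m F x y\<bar> \<le> (\<Sum>i<n. \<Sum>j<m. \<bar>x i * F i j * y j\<bar>)"
    unfolding bil_def by (rule order_trans[OF sum_abs sum_mono]) (rule sum_abs)
  also have "\<dots> \<le> (\<Sum>i<n. \<Sum>j<m. \<bar>x i\<bar> * \<bar>y j\<bar>)"
  proof (intro sum_mono)
    fix i j assume "i \<in> {..<n}" "j \<in> {..<m}"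
    then have "\<bar>F i j\<bar> \<le> 1" using F by auto
    have "\<bar>x i * F i j * y j\<bar> = \<bar>F i j\<bar> * (\<bar>x i\<bar> * \<bar>y j\<bar>)"
      by (simp add: abs_mult mult_ac)
    also have "\<dots> \<le> 1 * (\<bar>x i\<bar> * \<bar>y j\<bar>)"
      by (rule mult_right_mono) (use \<open>\<bar>F i j\<bar> \<le> 1\<close> in auto)
    finally show "\<bar>x i * F i j * y j\<bar> \<le> \<bar>x i\<bar> * \<bar>y j\<bar>" by simp
  qed
  also have "\<dots> = (\<Sum>i<n. \<bar>x i\<bar>) * (\<Sum>j<m. \<bar>y j\<bar>)"
    by (simp add: sum_product)
  also have "\<dots> \<le> (sqrt (real n) * vec_norm n x) * (sqrt (real m) * vec_norm m y)"
    by (intro mult_mono sum_abs_le) (auto simp: sum_nonneg vn_nonneg)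
  finally show ?thesis .
qed

lemma bil_diff:
  "bil n m F x y - bil n m F x' y' = bil n m F (\<lambda>i. x i - x' i) y + bil n m F x' (\<lambda>j. y j - y' j)"
  unfolding bil_def by (simp add: algebra_simps sum_subtractf sum.distrib)

lemma vn_triangle: "vec_norm d (\<lambda>j. a j + b j) \<le> vec_norm d a + vec_norm d b"
  unfolding vn_L2 by (rule L2_set_triangle_ineq)

lemma vn_scale: "vec_norm d (\<lambda>j. s * a j) = \<bar>s\<bar> * vec_norm d a"
  unfolding vn_L2 using L2_set_right_distrib[of "\<bar>s\<bar>" a "{..<d}"]
  by (simp add: L2_set_def power_mult_distrib)

lemma vn_zero_iff: "vec_norm d a = 0 \<longleftrightarrow> (\<forall>j<d. a j = 0)"
  unfolding vn_L2 by (subst L2_set_eq_0_iff) auto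

lemma vn_sq: "(vec_norm d a)\<^sup>2 = (\<Sum>j<d. (a j)\<^sup>2)"
  unfolding vec_norm_def by (simp add: sum_nonneg)

definition netset :: "nat \<Rightarrow> real \<Rightarrow> int \<Rightarrow> (nat \<Rightarrow> real) set" where
  "netset d h K = (\<lambda>k j. if j < d then h * of_int (k j) else 0) ` PiE {..<d} (\<lambda>_. {-K..K})"

lemma netset_finite: "finite (netset d h K)"
  unfolding netset_def by (intro finite_imageI finite_PiE) auto

lemma netset_card: "card (netset d h K) \<le> nat (2 * K + 1) ^ d"
proof -
  have "card (netset d h K) \<le> card (PiE {..<d} (\<lambda>_. {-K..K}))"
    unfolding netset_def by (intro card_image_le finite_PiE) auto
  also have "\<dots> = nat (2 * K + 1) ^ d"
    by (subst card_PiE) auto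
  finally show ?thesis .
qed

lemma net_approx:
  assumes h: "h > 0" and x: "vec_norm d x \<le> 1" and K: "of_int K \<ge> 1 / h + 1"
  shows "\<exists>x'\<in>netset d h K. vec_norm d (\<lambda>j. x j - x' j) \<le> h * sqrt (real d)"
proof -
  define k where "k = restrict (\<lambda>j. \<lfloor>x j / h\<rfloor>) {..<d}"
  define x' where "x' = (\<lambda>j. if j < d then h * of_int (k j) else 0)"
  have xj: "\<bar>x j\<bar> \<le> 1" if "j < d" for j
  proof -
    have "(x j)\<^sup>2 \<le> (\<Sum>j<d. (x j)\<^sup>2)" using that by (intro member_le_sum) auto
    also have "\<dots> = (vec_norm d x)\<^sup>2" by (simp add: vn_sq)
    also have "\<dots> \<le> 1\<^sup>2" using x vn_nonneg by (intro power_mono) auto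
    finally show ?thesis using abs_le_square_iff[of "x j" 1] by simp
  qed
  have kr: "k \<in> PiE {..<d} (\<lambda>_. {-K..K})"
  proof -
    have "\<lfloor>x j / h\<rfloor> \<in> {-K..K}" if "j < d" for j
    proof -
      have a: "x j / h \<le> 1 / h" using xj[OF that] h by (simp add: divide_right_mono)
      have "-1 \<le> x j" using xj[OF that] by linarith
      then have b: "x j / h \<ge> - 1 / h" using h divide_right_mono[of "-1" "x j" h] by simp
      have "of_int \<lfloor>x j / h\<rfloor> \<le> x j / h" by simp
      moreover have "of_int \<lfloor>x j / h\<rfloor> > x j / h - 1" by linarith
      ultimately have "of_int \<lfloor>x j / h\<rfloor> \<le> (of_int K::real)" "of_int \<lfloor>x j / h\<rfloor> \<ge> (- of_int K::real)"
        using a b K by linarith+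
      then show ?thesis by simp
    qed
    then show ?thesis unfolding k_def by auto
  qed
  then have "x' \<in> netset d h K" unfolding netset_def x'_def by (rule image_eqI[rotated]) simp
  moreover have "vec_norm d (\<lambda>j. x j - x' j) \<le> h * sqrt (real d)"
  proof -
    have dist: "\<bar>x j - x' j\<bar> \<le> h" if "j < d" for j
    proof -
      have e: "x' j = h * of_int \<lfloor>x j / h\<rfloor>" using that by (simp add: x'_def k_def)
      have fl1: "of_int \<lfloor>x j / h\<rfloor> \<le> x j / h" by simp
      have fl2: "of_int \<lfloor>x j / h\<rfloor> > x j / h - 1" by linarith
      have "h * of_int \<lfloor>x j / h\<rfloor> \<le> h * (x j / h)"
        by (rule mult_left_mono[OF fl1]) (use h in simp)
      moreover have "h * of_int \<lfloor>x j / h\<rfloor> > h * (x j / h - 1)"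
        by (rule mult_strict_left_mono[OF fl2 h])
      moreover have "h * (x j / h) = x j" using h by simp
      moreover have "h * (x j / h - 1) = x j - h" using h by (simp add: right_diff_distrib)
      ultimately have "h * of_int \<lfloor>x j / h\<rfloor> \<le> x j" "h * of_int \<lfloor>x j / h\<rfloor> > x j - h"
        by linarith+
      then show ?thesis using e by simp
    qed
    have sq: "(x j - x' j)\<^sup>2 \<le> h\<^sup>2" if "j < d" for j
    proof -
      have "\<bar>x j - x' j\<bar> \<le> \<bar>h\<bar>" using dist[OF that] h by simp
      then show ?thesis by (simp only: abs_le_square_iff)
    qed
    have "(vec_norm d (\<lambda>j. x j - x' j))\<^sup>2 = (\<Sum>j<d. (x j - x' j)\<^sup>2)" by (rule vn_sq)
    also have "\<dots> \<le> (\<Sum>j<d. h\<^sup>2)"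
      by (rule sum_mono) (use sq in simp)
    also have "\<dots> = real d * h\<^sup>2" by simp
    also have "\<dots> = (h * sqrt (real d))\<^sup>2" by (simp add: power_mult_distrib)
    finally have sqle: "(vec_norm d (\<lambda>j. x j - x' j))\<^sup>2 \<le> (h * sqrt (real d))\<^sup>2" .
    show ?thesis by (rule power2_le_imp_le[OF sqle]) (use h in simp)
  qed
  ultimately show ?thesis by blast
qed

lemma op_bound:
  assumes F: "\<forall>i<n. \<forall>j<m. \<bar>F i j\<bar> \<le> 1"
    and \<delta>: "0 < \<delta>" "\<delta> \<le> 1" and h: "h = \<delta> / sqrt (real N)" and nN: "n \<le> N" and mN: "m \<le> N" and Npos: "N > 0"
    and K: "of_int K \<ge> 1 / h + 1"
    and net: "\<forall>x'\<in>netset n h K. \<forall>y'\<in>netset m h K. vec_norm n x' \<le> 1 + \<delta> \<longrightarrow> vec_norm m y' \<le> 1 + \<delta> \<longrightarrow> \<bar>bil n m F x' y'\<bar> \<le> T"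
    and x: "vec_norm n x \<le> 1" and y: "vec_norm m y \<le> 1"
  shows "\<bar>bil n m F x y\<bar> \<le> T + 3 * \<delta> * sqrt (real n) * sqrt (real m)"
proof -
  have False: "N \<noteq> 0" using Npos by simp
  have hpos: "h > 0" using False \<delta> h by simp
  obtain x' where x': "x' \<in> netset n h K" and dx: "vec_norm n (\<lambda>j. x j - x' j) \<le> h * sqrt (real n)"
    using net_approx[OF hpos x K] by blast
  obtain y' where y': "y' \<in> netset m h K" and dy: "vec_norm m (\<lambda>j. y j - y' j) \<le> h * sqrt (real m)"
    using net_approx[OF hpos y K] by blast
  have hn: "h * sqrt (real n) \<le> \<delta>" "h * sqrt (real m) \<le> \<delta>"
    using nN mN False \<delta> unfolding h by (auto simp: field_simps)
  have dx': "vec_norm n (\<lambda>j. x j - x' j) \<le> \<delta>" and dy': "vec_norm m (\<lambda>j. y j - y' j) \<le> \<delta>"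
    using dx dy hn by linarith+
  have nx': "vec_norm n x' \<le> 1 + \<delta>"
  proof -
    have "vec_norm n x' = vec_norm n (\<lambda>j. x j + (- (x j - x' j)))" by simp
    also have "\<dots> \<le> vec_norm n x + vec_norm n (\<lambda>j. - (x j - x' j))" by (rule vn_triangle)
    also have "vec_norm n (\<lambda>j. - (x j - x' j)) = vec_norm n (\<lambda>j. x j - x' j)"
      using vn_scale[of n "-1" "\<lambda>j. x j - x' j"] by simp
    finally show ?thesis using x dx' by linarith
  qed
  have ny': "vec_norm m y' \<le> 1 + \<delta>"
  proof -
    have "vec_norm m y' = vec_norm m (\<lambda>j. y j + (- (y j - y' j)))" by simp
    also have "\<dots> \<le> vec_norm m y + vec_norm m (\<lambda>j. - (y j - y' j))" by (rule vn_triangle)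
    also have "vec_norm m (\<lambda>j. - (y j - y' j)) = vec_norm m (\<lambda>j. y j - y' j)"
      using vn_scale[of m "-1" "\<lambda>j. y j - y' j"] by simp
    finally show ?thesis using y dy' by linarith
  qed
  have b0: "\<bar>bil n m F x' y'\<bar> \<le> T" using net x' y' nx' ny' by blast
  have b1: "\<bar>bil n m F (\<lambda>i. x i - x' i) y\<bar> \<le> (sqrt (real n) * \<delta>) * (sqrt (real m) * 1)"
  proof (rule order_trans[OF bil_crude[OF F]])
    have f1: "sqrt (real n) * vec_norm n (\<lambda>i. x i - x' i) \<le> sqrt (real n) * \<delta>"
      by (rule mult_left_mono[OF dx']) simp
    have f2: "sqrt (real m) * vec_norm m y \<le> sqrt (real m) * 1"
      by (rule mult_left_mono[OF y]) simp
    show "sqrt (real n) * vec_norm n (\<lambda>i. x i - x' i) * (sqrt (real m) * vec_norm m y)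
        \<le> sqrt (real n) * \<delta> * (sqrt (real m) * 1)"
      by (rule mult_mono[OF f1 f2]) (use \<delta> in \<open>auto simp: vn_nonneg\<close>)
  qed
  have b2: "\<bar>bil n m F x' (\<lambda>j. y j - y' j)\<bar> \<le> (sqrt (real n) * (1 + \<delta>)) * (sqrt (real m) * \<delta>)"
  proof (rule order_trans[OF bil_crude[OF F]])
    have f1: "sqrt (real n) * vec_norm n x' \<le> sqrt (real n) * (1 + \<delta>)"
      by (rule mult_left_mono[OF nx']) simp
    have f2: "sqrt (real m) * vec_norm m (\<lambda>j. y j - y' j) \<le> sqrt (real m) * \<delta>"
      by (rule mult_left_mono[OF dy']) simp
    show "sqrt (real n) * vec_norm n x' * (sqrt (real m) * vec_norm m (\<lambda>j. y j - y' j))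
        \<le> sqrt (real n) * (1 + \<delta>) * (sqrt (real m) * \<delta>)"
      by (rule mult_mono[OF f1 f2]) (use \<delta> in \<open>auto simp: vn_nonneg\<close>)
  qed
  have "\<bar>bil n m F x y\<bar> \<le> \<bar>bil n m F x' y'\<bar> + \<bar>bil n m F (\<lambda>i. x i - x' i) y\<bar> + \<bar>bil n m F x' (\<lambda>j. y j - y' j)\<bar>"
    using bil_diff[of n m F x y x' y'] by linarith
  also have "\<dots> \<le> T + (sqrt (real n) * \<delta>) * (sqrt (real m) * 1) + (sqrt (real n) * (1 + \<delta>)) * (sqrt (real m) * \<delta>)"
    using b0 b1 b2 by linarith
  also have "\<dots> \<le> T + 3 * \<delta> * sqrt (real n) * sqrt (real m)"
  proof -
    have "(sqrt (real n) * (1 + \<delta>)) * (sqrt (real m) * \<delta>) \<le> (sqrt (real n) * 2) * (sqrt (real m) * \<delta>)"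
      using \<delta> by (intro mult_right_mono mult_left_mono) auto
    then show ?thesis by (simp add: algebra_simps)
  qed
  finally show ?thesis .
qed



lemma bil_mv: "bil n m F x y = (\<Sum>i<n. x i * mv m F y i)"
  by (simp add: bil_def mv_def sum_distrib_left mult.assoc)

lemma mv_zero: "(\<forall>j<m. y j = 0) \<Longrightarrow> mv m F y i = 0"
  by (simp add: mv_def)

lemma mv_norm_bound:
  assumes S: "\<forall>x y. vec_norm n x \<le> 1 \<longrightarrow> vec_norm m y \<le> 1 \<longrightarrow> \<bar>bil n m F x y\<bar> \<le> S"
  shows "vec_norm n (mv m F y) \<le> S * vec_norm m y"
proof -
  have S0: "S \<ge> 0" using S[rule_format, of "\<lambda>_. 0" "\<lambda>_. 0"] by (simp add: vec_norm_def bil_def)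
  show ?thesis
  proof (cases "vec_norm m y = 0")
    case True
    then have "\<forall>j<m. y j = 0" by (simp add: vn_zero_iff)
    then have "vec_norm n (mv m F y) = 0" by (simp add: vn_zero_iff mv_zero)
    then show ?thesis using True by simp
  next
    case False
    define r where "r = vec_norm m y"
    have r: "r > 0" using False vn_nonneg[of m y] unfolding r_def by linarith
    define y' where "y' = (\<lambda>j. (1 / r) * y j)"
    have ny': "vec_norm m y' = 1" unfolding y'_def vn_scale using r by (simp add: r_def)
    define z where "z = mv m F y'"
    have z: "z = (\<lambda>i. (1 / r) * mv m F y i)" unfolding z_def y'_def by (rule ext) (rule mv_scale)
    have nz: "vec_norm n z = (1 / r) * vec_norm n (mv m F y)" unfolding z vn_scale using r by simp
    have zS: "vec_norm n z \<le> S"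
    proof (cases "vec_norm n z = 0")
      case True then show ?thesis using S0 by simp
    next
      case False
      define q where "q = vec_norm n z"
      have q: "q > 0" using False vn_nonneg[of n z] unfolding q_def by linarith
      define x where "x = (\<lambda>i. (1 / q) * z i)"
      have nx: "vec_norm n x = 1" unfolding x_def vn_scale using q by (simp add: q_def)
      have "bil n m F x y' = (\<Sum>i<n. (1 / q) * (z i)\<^sup>2)"
        unfolding bil_mv x_def z_def by (simp add: power2_eq_square mult.assoc)
      also have "\<dots> = (1 / q) * q\<^sup>2" unfolding q_def vn_sq by (simp add: sum_distrib_left)
      also have "\<dots> = q" using q by (simp add: power2_eq_square)
      finally have "bil n m F x y' = q" .
      with S[rule_format, of x y'] nx ny' show ?thesis by (simp add: q_def)
    qed
    then have "(1 / r) * vec_norm n (mv m F y) \<le> S" using nz by simp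
    then show ?thesis using r by (simp add: r_def field_simps)
  qed
qed

lemma vec_inner_cs: "vec_inner m a b \<le> vec_norm m a * vec_norm m b"
proof -
  have "vec_inner m a b \<le> (\<Sum>j<m. \<bar>a j\<bar> * \<bar>b j\<bar>)"
    unfolding vec_inner_def by (intro sum_mono) (simp add: abs_mult[symmetric])
  also have "\<dots> \<le> vec_norm m a * vec_norm m b"
    unfolding vn_L2 by (rule L2_set_mult_ineq)
  finally show ?thesis .
qed

lemma mv_decomp:
  "mv m A y i = u' i * vec_inner m v y + mv m (\<lambda>i j. A i j - u' i * v j) y i"
  unfolding mv_def vec_inner_def by (simp add: algebra_simps sum_subtractf sum_distrib_left)

lemma det_cos:
  fixes A :: "nat \<Rightarrow> nat \<Rightarrow> real" and u' v w :: "nat \<Rightarrow> real"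
  assumes m: "m > 0"
    and Fb: "\<forall>y. vec_norm n (mv m (\<lambda>i j. A i j - u' i * v j) y) \<le> S * vec_norm m y"
    and lead: "leading_right_sv n m A w"
    and pos: "vec_inner m w v \<ge> 0"
    and nu: "vec_norm n u' > 0" and nv: "vec_norm m v > 0"
  shows "vec_norm n u' * vec_inner m w v \<ge> vec_norm m w * (vec_norm n u' * vec_norm m v - 2 * S)"
proof -
  define F where "F = (\<lambda>i j. A i j - u' i * v j)"
  define U where "U = vec_norm n u'"
  define V where "V = vec_norm m v"
  define W where "W = vec_norm m w"
  have eq: "mv m A y i = vec_inner m v y * u' i + mv m F y i" for y i
    using mv_decomp[of m A y i u' v] unfolding F_def by (simp add: mult.commute)
  have eqf: "mv m A y = (\<lambda>i. vec_inner m v y * u' i + mv m F y i)" for y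
    by (rule ext) (rule eq)
  have upper: "vec_norm n (mv m A y) \<le> U * \<bar>vec_inner m v y\<bar> + S * vec_norm m y" for y
  proof -
    have a1: "vec_norm n (mv m A y) \<le> vec_norm n (\<lambda>i. vec_inner m v y * u' i) + vec_norm n (mv m F y)"
      unfolding eqf by (rule vn_triangle)
    have a2: "vec_norm n (\<lambda>i. vec_inner m v y * u' i) = U * \<bar>vec_inner m v y\<bar>"
      unfolding vn_scale U_def by (rule mult.commute)
    have a3: "vec_norm n (mv m F y) \<le> S * vec_norm m y"
      using Fb unfolding F_def by blast
    show ?thesis using a1 a2 a3 by linarith
  qed
  have lower: "U * \<bar>vec_inner m v y\<bar> \<le> vec_norm n (mv m A y) + S * vec_norm m y" for y
  proof -
    have e2: "(\<lambda>i. mv m A y i + (-1) * mv m F y i) = (\<lambda>i. vec_inner m v y * u' i)"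
      using eq by simp
    have "U * \<bar>vec_inner m v y\<bar> = vec_norm n (\<lambda>i. mv m A y i + (-1) * mv m F y i)"
      unfolding e2 vn_scale U_def by (rule mult.commute)
    also have "\<dots> \<le> vec_norm n (mv m A y) + vec_norm n (\<lambda>i. (-1) * mv m F y i)"
      by (rule vn_triangle)
    also have "\<dots> \<le> vec_norm n (mv m A y) + S * vec_norm m y"
      using Fb unfolding F_def vn_scale by simp
    finally show ?thesis .
  qed
  have qfn: "qf n m A y = (vec_norm n (mv m A y))\<^sup>2" for y
    unfolding qf_def by (simp add: vn_sq)
  obtain z \<mu> where z: "\<exists>j<m. z j \<noteq> 0" "\<forall>j<m. gram_mult n m A z j = \<mu> * z j"
      and top: "\<forall>y. vec_norm m y = 1 \<longrightarrow> qf n m A y \<le> \<mu>"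
    using exists_top_eig[OF m] by blast
  obtain lam where wl: "\<forall>j<m. gram_mult n m A w j = lam * w j"
      and mx: "\<forall>\<mu> y. (\<exists>j<m. y j \<noteq> 0) \<and> (\<forall>j<m. gram_mult n m A y j = \<mu> * y j) \<longrightarrow> \<mu> \<le> lam"
      and wnz: "\<exists>j<m. w j \<noteq> 0"
    using lead unfolding leading_right_sv_def by blast
  have mul: "\<mu> \<le> lam" using mx z by blast
  have W: "W > 0" using wnz vn_nonneg[of m w] vn_zero_iff[of m w] unfolding W_def by fastforce
  have qw: "qf n m A w = lam * W\<^sup>2"
  proof -
    have "qf n m A w = (\<Sum>j<m. w j * gram_mult n m A w j)"
      unfolding qf_def gram_quad by (simp add: power2_eq_square)
    also have "\<dots> = (\<Sum>j<m. lam * (w j)\<^sup>2)"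
      using wl by (intro sum.cong) (auto simp: power2_eq_square)
    finally show ?thesis unfolding W_def vn_sq by (simp add: sum_distrib_left)
  qed
  have qv: "qf n m A v \<le> lam * V\<^sup>2"
  proof -
    have "vec_norm m (\<lambda>j. (1 / V) * v j) = 1" unfolding vn_scale using nv unfolding V_def by simp
    then have "qf n m A (\<lambda>j. (1 / V) * v j) \<le> \<mu>" using top by blast
    moreover have "qf n m A (\<lambda>j. (1 / V) * v j) = (1 / V)\<^sup>2 * qf n m A v" by (rule qf_scale)
    ultimately have "(1 / V)\<^sup>2 * qf n m A v \<le> lam" using mul by linarith
    then show ?thesis using nv unfolding V_def by (simp add: field_simps power2_eq_square)
  qed
  define a where "a = vec_norm n (mv m A v)"
  define b where "b = vec_norm n (mv m A w)"
  have a0: "a \<ge> 0" "b \<ge> 0" unfolding a_def b_def by (simp_all add: vn_nonneg)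
  have "(a * W)\<^sup>2 \<le> (b * V)\<^sup>2"
  proof -
    have "(a * W)\<^sup>2 = qf n m A v * W\<^sup>2" unfolding a_def qfn by (simp add: power_mult_distrib)
    also have "\<dots> \<le> lam * V\<^sup>2 * W\<^sup>2" using qv by (intro mult_right_mono) auto
    also have "\<dots> = qf n m A w * V\<^sup>2" using qw by simp
    also have "\<dots> = (b * V)\<^sup>2" unfolding b_def qfn by (simp add: power_mult_distrib)
    finally show ?thesis .
  qed
  then have aw: "a * W \<le> b * V"
    by (rule power2_le_imp_le) (use a0 nv in \<open>simp add: V_def\<close>)
  have vv: "vec_inner m v v = V\<^sup>2" unfolding V_def vn_sq vec_inner_def by (simp add: power2_eq_square)
  have la: "U * V\<^sup>2 \<le> a + S * V" using lower[of v] unfolding a_def vv V_def by simp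
  have iw: "vec_inner m v w = vec_inner m w v" unfolding vec_inner_def by (simp add: mult.commute)
  have ub: "b \<le> U * vec_inner m w v + S * W" using upper[of w] pos unfolding b_def iw W_def by simp
  have "(U * V\<^sup>2 - S * V) * W \<le> (U * vec_inner m w v + S * W) * V"
  proof -
    have "(U * V\<^sup>2 - S * V) * W \<le> a * W" using la W by (intro mult_right_mono) auto
    also have "\<dots> \<le> b * V" by (rule aw)
    also have "\<dots> \<le> (U * vec_inner m w v + S * W) * V" using ub nv unfolding V_def by (intro mult_right_mono) auto
    finally show ?thesis .
  qed
  then have "V * ((U * V - S) * W) \<le> V * (U * vec_inner m w v + S * W)"
    by (simp add: algebra_simps power2_eq_square)
  then have "(U * V - S) * W \<le> U * vec_inner m w v + S * W"
    using nv unfolding V_def by (simp add: mult_le_cancel_left_pos)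
  then show ?thesis unfolding U_def V_def W_def by (simp add: algebra_simps)
qed

lemma pair_prob_bound:
  fixes P :: "'a pmf" and Q :: "'b pmf"
  assumes "\<And>y. measure_pmf.prob P {x. (x, y) \<in> B} \<le> r"
  shows "measure_pmf.prob (pair_pmf P Q) B \<le> r"
proof -
  have "0 \<le> measure_pmf.prob P {x. (x, undefined) \<in> B}" by simp
  then have r0: "r \<ge> 0" using assms[of undefined] by linarith
  have "emeasure (measure_pmf (pair_pmf P Q)) B = emeasure (measure_pmf (pair_pmf Q P)) ((\<lambda>(x, y). (y, x)) -` B)"
    by (subst pair_commute_pmf) simp
  also have "\<dots> = (\<integral>\<^sup>+z. indicator ((\<lambda>(x, y). (y, x)) -` B) z \<partial>pair_pmf Q P)"
    by (simp add: nn_integral_indicator)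
  also have "\<dots> = (\<integral>\<^sup>+a. \<integral>\<^sup>+b. indicator ((\<lambda>(x, y). (y, x)) -` B) (a, b) \<partial>P \<partial>Q)"
    by (rule nn_integral_pair_pmf')
  also have "\<dots> = (\<integral>\<^sup>+a. emeasure (measure_pmf P) {x. (x, a) \<in> B} \<partial>Q)"
  proof (rule nn_integral_cong)
    fix a
    have ind: "indicator ((\<lambda>(x, y). (y, x)) -` B) (a, b) = (indicator {x. (x, a) \<in> B} b :: ennreal)" for b
      by (simp add: indicator_def)
    show "(\<integral>\<^sup>+b. indicator ((\<lambda>(x, y). (y, x)) -` B) (a, b) \<partial>P) = emeasure (measure_pmf P) {x. (x, a) \<in> B}"
      by (simp add: ind)
  qed
  also have "\<dots> \<le> (\<integral>\<^sup>+a. ennreal r \<partial>Q)"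
    by (intro nn_integral_mono) (use assms r0 in \<open>auto simp: measure_pmf.emeasure_eq_measure\<close>)
  also have "\<dots> = ennreal r" by (simp add: measure_pmf.emeasure_space_1)
  finally have "ennreal (measure_pmf.prob (pair_pmf P Q) B) \<le> ennreal r"
    by (simp add: measure_pmf.emeasure_eq_measure)
  then show ?thesis using r0 by simp
qed



lemma C4_le: assumes "0 < c" "c < 1"
  shows "const_C4 c \<le> c ^ 6 / 432" "const_C4 c \<le> c\<^sup>2 / 18" "const_C4 c \<ge> 0"
  using assms unfolding const_C4_def const_C2_def
  by (auto simp: min_def power_numeral_reduce field_simps intro: mult_left_mono)

lemma numeric_net:
  fixes c \<epsilon> h T :: real and n m :: nat and K :: int
  assumes c: "0 < c" "c < 1" and n: "n > 0" and m: "m > 0" and eps: "0 < \<epsilon>" "\<epsilon> < 1"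
    and hyp: "\<epsilon>\<^sup>2 * real (min m n) > (6 * const_C3 c / c)\<^sup>2 * ln (real (m + n))"
    and h: "h = (\<epsilon> * c\<^sup>2 / 24) / sqrt (real (m + n))"
    and K: "K = \<lceil>1 / h\<rceil> + 1"
    and T: "T = \<epsilon> * c\<^sup>2 * sqrt (real n) * sqrt (real m) / 8"
  shows "real (nat (2 * K + 1)) ^ (m + n) * (2 * exp (- T\<^sup>2))
           \<le> real (m + n) * exp (- const_C4 c * real (min m n) * \<epsilon>\<^sup>2)"
proof -
  define Nr where "Nr = real (m + n)"
  define s where "s = real (min m n)"
  define L where "L = ln Nr"
  define Z where "Z = \<epsilon>\<^sup>2 * s"
  have Nr2: "Nr \<ge> 2" using n m unfolding Nr_def by simp
  have s1: "s \<ge> 1" "s \<le> Nr" using n m unfolding s_def Nr_def by auto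
  have nm: "2 * real n * real m \<ge> Nr * s"
  proof (cases "m \<le> n")
    case True
    then have "real m * real m \<le> real m * real n" by (intro mult_left_mono) auto
    then show ?thesis using True unfolding Nr_def s_def by (simp add: min_def algebra_simps)
  next
    case False
    then have "real n * real n \<le> real n * real m" by (intro mult_left_mono) auto
    then show ?thesis using False unfolding Nr_def s_def by (simp add: min_def algebra_simps)
  qed
  have ln2: "ln (2::real) \<ge> 1/2"
  proof -
    have "ln (1/2::real) \<le> 1/2 - 1" by (rule ln_le_minus_one) simp
    then show ?thesis by (simp add: ln_div)
  qed
  have "ln 2 \<le> ln Nr" using Nr2 by simp
  then have L: "L \<ge> 1/2" unfolding L_def using ln2 by linarith
  have C3: "const_C3 c \<ge> 4 / c ^ 4 + 30"
  proof -
    have "sqrt 2 \<ge> (1::real)" by simp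
    then show ?thesis unfolding const_C3_def by linarith
  qed
  have c4pos: "c ^ 4 > 0" using c by simp
  have key: "c ^ 4 * (6 * const_C3 c / c)\<^sup>2 \<ge> 576 / c ^ 6 + 8640 / c\<^sup>2"
  proof -
    have "4 / c ^ 4 + 30 > 0" using c4pos by (simp add: add_pos_pos)
    then have "const_C3 c \<ge> 0" using C3 by linarith
    have sq: "(const_C3 c)\<^sup>2 \<ge> (4 / c ^ 4 + 30)\<^sup>2"
      using C3 c4pos by (intro power_mono) (auto simp: add_nonneg_nonneg)
    define a where "a = 4 / c ^ 4"
    have a0: "a \<ge> 0" unfolding a_def using c4pos by simp
    have "(a + 30)\<^sup>2 \<ge> a\<^sup>2 + 60 * a"
      using a0 by (simp add: power2_eq_square algebra_simps)
    moreover have "a\<^sup>2 = 16 / c ^ 8" unfolding a_def by (simp add: power_divide power_mult[symmetric])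
    moreover have "60 * a = 240 / c ^ 4" unfolding a_def by simp
    ultimately have "(4 / c ^ 4 + 30)\<^sup>2 \<ge> 16 / c ^ 8 + 240 / c ^ 4" unfolding a_def by simp
    with sq have sq2: "(const_C3 c)\<^sup>2 \<ge> 16 / c ^ 8 + 240 / c ^ 4" by linarith
    have "c ^ 4 * (6 * const_C3 c / c)\<^sup>2 = 36 * c\<^sup>2 * (const_C3 c)\<^sup>2"
      using c by (simp add: power2_eq_square power_numeral_reduce field_simps)
    also have "\<dots> \<ge> 36 * c\<^sup>2 * (16 / c ^ 8 + 240 / c ^ 4)"
      using sq2 by (intro mult_left_mono) auto
    also have "36 * c\<^sup>2 * (16 / c ^ 8 + 240 / c ^ 4) = 576 / c ^ 6 + 8640 / c\<^sup>2"
      using c by (simp add: power2_eq_square power_numeral_reduce field_simps)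
    finally show ?thesis .
  qed
  have hypZ: "Z > (6 * const_C3 c / c)\<^sup>2 * L" using hyp unfolding Z_def s_def L_def Nr_def by simp
  have c4Z: "c ^ 4 * Z \<ge> (576 / c ^ 6 + 8640 / c\<^sup>2) * L"
  proof -
    have "c ^ 4 * Z \<ge> c ^ 4 * ((6 * const_C3 c / c)\<^sup>2 * L)" using hypZ c4pos by simp
    also have "c ^ 4 * ((6 * const_C3 c / c)\<^sup>2 * L) \<ge> (576 / c ^ 6 + 8640 / c\<^sup>2) * L"
      using key L by (simp add: mult.assoc[symmetric] mult_right_mono)
    finally show ?thesis by linarith
  qed
  have ic6: "1 / c ^ 6 \<ge> 1" "1 / c\<^sup>2 \<ge> 1" using c by (simp_all add: power_le_one)
  have Zge: "c ^ 4 * Z / 200 \<ge> L + 9 + 2 / c\<^sup>2"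
  proof -
    have "576 * L * 1 \<le> 576 * L * (1 / c ^ 6)" by (rule mult_left_mono[OF ic6(1)]) (use L in simp)
    then have a: "576 / c ^ 6 * L \<ge> 576 * L" by simp
    have b: "8640 / c\<^sup>2 * L \<ge> 4320 / c\<^sup>2" using L c by (simp add: field_simps)
    have "(576 / c ^ 6 + 8640 / c\<^sup>2) * L \<ge> 576 * L + 4320 / c\<^sup>2" using a b by (simp add: algebra_simps)
    then show ?thesis using c4Z L ic6 by simp
  qed
  have Z1: "Z \<ge> 1"
  proof -
    have "c ^ 4 * Z \<ge> 200" using Zge L ic6 by simp
    moreover have "c ^ 4 \<le> 1" using c by (simp add: power_le_one)
    moreover have "Z \<ge> 0" unfolding Z_def using s1 by simp
    ultimately have "c ^ 4 * Z \<le> Z" using c4pos by (intro mult_left_le_one_le) auto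
    with \<open>c ^ 4 * Z \<ge> 200\<close> show ?thesis by linarith
  qed
  have eps2: "\<epsilon>\<^sup>2 \<ge> 1 / Nr"
  proof -
    have "\<epsilon>\<^sup>2 = Z / s" unfolding Z_def using s1 by simp
    also have "Z / s \<ge> 1 / s" using Z1 s1 by (simp add: divide_right_mono)
    also have "1 / s \<ge> 1 / Nr" using s1 by (simp add: frac_le)
    finally show ?thesis by linarith
  qed
  have leps: "ln (1 / \<epsilon>) \<le> L / 2"
  proof -
    have "ln (\<epsilon>\<^sup>2) \<ge> ln (1 / Nr)" using eps2 Nr2 eps by simp
    then have "2 * ln \<epsilon> \<ge> - L" unfolding L_def using eps Nr2 by (simp add: ln_div ln_realpow)
    then show ?thesis using eps by (simp add: ln_div)
  qed
  have lc: "ln (1 / c) \<le> 1 / c\<^sup>2"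
  proof -
    have "ln (1 / c) \<le> 1 / c - 1" using c by (intro ln_le_minus_one) simp
    also have "1 / c \<le> 1 / c\<^sup>2" using c by (simp add: field_simps power2_eq_square mult_left_le_one_le)
    finally show ?thesis by simp
  qed
  have hpos: "h > 0" using h eps c Nr2 by (simp add: Nr_def)
  have h1: "h \<le> 1"
  proof -
    have "\<epsilon> * c\<^sup>2 \<le> 1" using eps c by (simp add: mult_le_one power_le_one)
    moreover have "sqrt (real (m + n)) \<ge> 1" using n by simp
    ultimately have a: "\<epsilon> * c\<^sup>2 / 24 \<le> sqrt (real (m + n))" by linarith
    have "sqrt (real (m + n)) > 0" using n by simp
    with a show ?thesis unfolding h by (simp add: divide_le_eq)
  qed
  have ih: "7 / h = 168 * sqrt Nr * (1 / \<epsilon>) * (1 / c)\<^sup>2"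
    unfolding h Nr_def using eps c by (simp add: field_simps power2_eq_square)
  have l168: "ln (168::real) \<le> 8"
  proof -
    have "ln (168::real) \<le> ln (2 ^ 8)" by simp
    also have "\<dots> = 8 * ln 2" using ln_realpow[of "2::real" 8] by simp
    also have "ln (2::real) \<le> 1" using ln_le_minus_one[of 2] by simp
    finally show ?thesis by simp
  qed
  have l7h: "ln (7 / h) \<le> 8 + L + 2 / c\<^sup>2"
  proof -
    have p1: "sqrt Nr > 0" "1 / \<epsilon> > 0" "(1 / c)\<^sup>2 > 0" using Nr2 eps c by simp_all
    have "ln (7 / h) = ln (168 * sqrt Nr * (1 / \<epsilon>)) + ln ((1 / c)\<^sup>2)"
      unfolding ih by (rule ln_mult_pos) (use p1 in simp_all)
    also have "ln (168 * sqrt Nr * (1 / \<epsilon>)) = ln (168 * sqrt Nr) + ln (1 / \<epsilon>)"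
      by (rule ln_mult_pos) (use p1 in simp_all)
    also have "ln (168 * sqrt Nr) = ln 168 + ln (sqrt Nr)"
      by (rule ln_mult_pos) (use p1 in simp_all)
    finally have "ln (7 / h) = ln 168 + ln (sqrt Nr) + ln (1 / \<epsilon>) + ln ((1 / c)\<^sup>2)" .
    also have "ln (sqrt Nr) = L / 2" unfolding L_def using Nr2 by (simp add: ln_sqrt)
    also have "ln ((1 / c)\<^sup>2) = 2 * ln (1 / c)" using c by (simp add: ln_realpow)
    finally show ?thesis using l168 leps lc by linarith
  qed
  have Kb: "real (nat (2 * K + 1)) \<le> 7 / h"
  proof -
    have "of_int K \<le> 1 / h + 2" unfolding K by linarith
    moreover have "K \<ge> 0"
    proof -
      have "1 / h \<le> of_int \<lceil>1 / h\<rceil>" by (rule le_of_int_ceiling)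
      moreover have "1 / h > 0" using hpos by simp
      ultimately have "real_of_int \<lceil>1 / h\<rceil> > 0" by linarith
      then have "\<lceil>1 / h\<rceil> > 0" by (simp only: of_int_0_less_iff)
      then show ?thesis unfolding K by linarith
    qed
    ultimately have "real (nat (2 * K + 1)) \<le> 2 / h + 5" by simp
    also have "\<dots> \<le> 7 / h" using hpos h1 by (simp add: field_simps)
    finally show ?thesis .
  qed
  have T2: "T\<^sup>2 \<ge> c ^ 4 * Nr * Z / 128"
  proof -
    have "T\<^sup>2 = \<epsilon>\<^sup>2 * c ^ 4 * (real n * real m) / 64"
      unfolding T by (simp add: power2_eq_square power_numeral_reduce field_simps)
    also have "\<epsilon>\<^sup>2 * c ^ 4 * (real n * real m) / 64 \<ge> \<epsilon>\<^sup>2 * c ^ 4 * (Nr * s / 2) / 64"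
      using nm c4pos by (intro divide_right_mono mult_left_mono) auto
    finally show ?thesis unfolding Z_def by (simp add: field_simps)
  qed
  have C4: "const_C4 c * s * \<epsilon>\<^sup>2 \<le> c ^ 4 * Nr * Z / 432"
  proof -
    have "const_C4 c \<le> c ^ 6 / 432" using C4_le c by blast
    also have "c ^ 6 / 432 \<le> c ^ 4 / 432" using c by (simp add: power_decreasing)
    finally have "const_C4 c * Z \<le> c ^ 4 / 432 * Z" using Z1 by (simp add: mult_right_mono)
    also have "c ^ 4 / 432 * Z \<le> c ^ 4 / 432 * (Nr * Z)" using Z1 Nr2 c4pos
      by (intro mult_left_mono) auto
    finally show ?thesis unfolding Z_def by (simp add: mult_ac)
  qed
  have main: "ln 2 + Nr * ln (7 / h) - T\<^sup>2 \<le> - (const_C4 c * s * \<epsilon>\<^sup>2)"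
  proof -
    have "ln 2 + Nr * ln (7 / h) \<le> Nr * (ln (7 / h) + 1)"
      using ln_le_minus_one[of 2] Nr2 by (simp add: algebra_simps)
    also have "\<dots> \<le> Nr * (c ^ 4 * Z / 200)"
      using l7h Zge Nr2 by (intro mult_left_mono) auto
    finally have "ln 2 + Nr * ln (7 / h) \<le> Nr * (c ^ 4 * Z / 200)" .
    moreover have "Nr * (c ^ 4 * Z / 200) + c ^ 4 * Nr * Z / 432 \<le> c ^ 4 * Nr * Z / 128"
      using Nr2 c4pos Z1 by (simp add: field_simps mult_nonneg_nonneg)
    ultimately show ?thesis using T2 C4 by linarith
  qed
  have "real (nat (2 * K + 1)) ^ (m + n) * (2 * exp (- T\<^sup>2)) \<le> (7 / h) ^ (m + n) * (2 * exp (- T\<^sup>2))"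
    using Kb by (intro mult_right_mono power_mono) auto
  also have "(7 / h) ^ (m + n) = exp (Nr * ln (7 / h))"
  proof -
    have "exp (Nr * ln (7 / h)) = exp (ln (7 / h)) ^ (m + n)"
      unfolding Nr_def by (rule exp_of_nat_mult)
    also have "exp (ln (7 / h)) = 7 / h" using hpos by simp
    finally show ?thesis by simp
  qed
  also have "exp (Nr * ln (7 / h)) * (2 * exp (- T\<^sup>2)) = exp (ln 2 + Nr * ln (7 / h) - T\<^sup>2)"
    by (simp add: exp_add exp_diff exp_minus field_simps)
  also have "\<dots> \<le> exp (- (const_C4 c * s * \<epsilon>\<^sup>2))" using main by simp
  also have "\<dots> \<le> Nr * exp (- (const_C4 c * s * \<epsilon>\<^sup>2))" using Nr2 by simp
  finally show ?thesis unfolding Nr_def s_def by simp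
qed



lemma sum_pairs:
  fixes f :: "nat \<times> nat \<Rightarrow> 'a::comm_monoid_add" and n m :: nat
  shows "(\<Sum>k\<in>{0..<n}\<times>{0..<m}. f k) = (\<Sum>i<n. \<Sum>j<m. f (i, j))"
proof -
  have e: "{0..<n::nat} = {..<n}" "{0..<m::nat} = {..<m}" by auto
  have "(\<Sum>k\<in>{..<n}\<times>{..<m}. f k) = (\<Sum>(i, j)\<in>{..<n}\<times>{..<m}. f (i, j))" by simp
  also have "\<dots> = (\<Sum>i<n. \<Sum>j<m. f (i, j))" by (rule sum.cartesian_product[symmetric])
  finally show ?thesis unfolding e .
qed

lemma rank_one_alt:
  "rank_one_pmf n m u v = Pi_pmf ({0..<n}\<times>{0..<m}) False (\<lambda>k. bernoulli_pmf ((\<lambda>(i, j). u i * v j) k))"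
  unfolding rank_one_pmf_def by (rule arg_cong[where f="Pi_pmf _ False"]) (auto simp: fun_eq_iff)

lemma abs_aux:
  fixes A B e :: real
  assumes "A < e / 2" "- (e / 2) < A" "B \<le> e / 2" "0 \<le> B"
  shows "\<bar>A - B\<bar> < e"
  using assms by (auto simp: abs_less_iff)

lemma est_lemma:
  fixes W V I R ui \<epsilon> :: real
  assumes W: "W > 0" and V: "V > 0" and I1: "I \<le> W * V" and I2: "I \<ge> W * V * (1 - \<epsilon> / 2)"
    and ui: "0 \<le> ui" "ui \<le> 1" and big: "\<bar>(R + ui * I) / (W * V) - ui\<bar> > \<epsilon>"
  shows "\<bar>R\<bar> \<ge> \<epsilon> * W * V / 2"
proof (rule ccontr)
  assume "\<not> ?thesis"
  then have R: "\<bar>R\<bar> < \<epsilon> * W * V / 2" by simp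
  have WV: "W * V > 0" using W V by simp
  define t where "t = 1 - I / (W * V)"
  have "I / (W * V) \<le> 1" using I1 WV by (simp add: pos_divide_le_eq)
  then have t0: "t \<ge> 0" unfolding t_def by simp
  have "I / (W * V) \<ge> 1 - \<epsilon> / 2" using I2 WV by (simp add: pos_le_divide_eq mult.commute)
  then have t1: "t \<le> \<epsilon> / 2" unfolding t_def by simp
  have eq: "(R + ui * I) / (W * V) - ui = R / (W * V) - ui * t"
    unfolding t_def by (simp add: add_divide_distrib right_diff_distrib mult.commute)
  have r1: "R < \<epsilon> / 2 * (W * V)" "- (\<epsilon> / 2 * (W * V)) < R" using R by (simp_all add: abs_less_iff mult_ac)
  have rb: "R / (W * V) < \<epsilon> / 2" "- (\<epsilon> / 2) < R / (W * V)"
    using r1 WV by (simp_all add: pos_divide_less_eq pos_less_divide_eq)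
  moreover have "ui * t \<le> \<epsilon> / 2" using mult_left_le_one_le[OF t0 ui] t1 by linarith
  moreover have "ui * t \<ge> 0" using ui t0 by simp
  ultimately have "\<bar>R / (W * V) - ui * t\<bar> < \<epsilon>" using rb abs_aux by blast
  with big eq show False by simp
qed

theorem mainTheorem6:
  fixes c C :: real and n m :: nat
    and u u' v :: "nat \<Rightarrow> real"
    and vhat :: "(nat \<times> nat \<Rightarrow> bool) \<Rightarrow> nat \<Rightarrow> real"
    and i :: nat and \<epsilon> :: real
  assumes "0 < c" "c < C" "C < 1"
    and "\<forall>k<n. u k \<in> {c..C}" "\<forall>k<n. u' k \<in> {c..C}" "\<forall>j<m. v j \<in> {c..C}"
    and "\<forall>X'. leading_right_sv n m (real_mat X') (vhat X') \<and> vec_inner m (vhat X') v \<ge> 0"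
    and "i < n"
    and "0 < \<epsilon>" "\<epsilon> < 1"
    and "\<epsilon>\<^sup>2 * real (min m n) > (6 * const_C3 c / c)\<^sup>2 * ln (real (m + n))"
  shows "measure_pmf.prob (pair_pmf (rank_one_pmf n m u v) (rank_one_pmf n m u' v))
           {(X, X'). \<bar>(\<Sum>j<m. real_mat X i j * vhat X' j) / (vec_norm m (vhat X') * vec_norm m v) - u i\<bar> > \<epsilon>}
         \<le> real (m + n + 2) * exp (- const_C4 c * real (min m n) * \<epsilon>\<^sup>2)"
proof -
  note cc = assms(1-3) and uu = assms(4) and uu' = assms(5) and vv = assms(6)
    and lead = assms(7) and ii = assms(8) and eps = assms(9,10) and hyp = assms(11)
  have c1: "c < 1" using cc by simp
  have n: "n > 0" using ii by simp
  have m: "m > 0" using lead[rule_format, of "\<lambda>_. False"] unfolding leading_right_sv_def by auto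
  define P where "P = rank_one_pmf n m u v"
  define Q where "Q = rank_one_pmf n m u' v"
  define U where "U = vec_norm n u'"
  define V where "V = vec_norm m v"
  define Nr where "Nr = real (m + n)"
  define \<delta> where "\<delta> = \<epsilon> * c\<^sup>2 / 24"
  define h where "h = \<delta> / sqrt Nr"
  define K where "K = \<lceil>1 / h\<rceil> + 1"
  define T where "T = \<epsilon> * c\<^sup>2 * sqrt (real n) * sqrt (real m) / 8"
  define E where "E = exp (- const_C4 c * real (min m n) * \<epsilon>\<^sup>2)"
  define Fm where "Fm = (\<lambda>X' i j. real_mat X' i j - u' i * v j)"
  define NN where "NN = {x'\<in>netset n h K. vec_norm n x' \<le> 1 + \<delta>} \<times> {y'\<in>netset m h K. vec_norm m y' \<le> 1 + \<delta>}"
  define Good where "Good = (\<lambda>X'. \<forall>p\<in>NN. \<bar>bil n m (Fm X') (fst p) (snd p)\<bar> < T)"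
  define W where "W = (\<lambda>X'. vec_norm m (vhat X'))"
  define R where "R = (\<lambda>X X'. \<Sum>j<m. (real_mat X i j - u i * v j) * vhat X' j)"
  define Row where "Row = {(X, X'). \<bar>R X X'\<bar> \<ge> \<epsilon> * W X' * V / 2}"
  define B where "B = {(X, X'). \<bar>(\<Sum>j<m. real_mat X i j * vhat X' j) / (vec_norm m (vhat X') * vec_norm m v) - u i\<bar> > \<epsilon>}"
  have c2: "c\<^sup>2 > 0" using cc by simp
  have U2: "U\<^sup>2 \<ge> real n * c\<^sup>2"
  proof -
    have "(\<Sum>k<n. c\<^sup>2) \<le> (\<Sum>k<n. (u' k)\<^sup>2)"
      using uu' cc by (intro sum_mono power_mono) auto
    then show ?thesis unfolding U_def vn_sq by simp
  qed
  have V2: "V\<^sup>2 \<ge> real m * c\<^sup>2"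
  proof -
    have "(\<Sum>k<m. c\<^sup>2) \<le> (\<Sum>k<m. (v k)\<^sup>2)"
      using vv cc by (intro sum_mono power_mono) auto
    then show ?thesis unfolding V_def vn_sq by simp
  qed
  have "(c * sqrt (real n))\<^sup>2 \<le> U\<^sup>2" using U2 by (simp add: power_mult_distrib mult.commute)
  then have Ub: "U \<ge> c * sqrt (real n)"
    by (rule power2_le_imp_le) (simp add: U_def vn_nonneg)
  have "(c * sqrt (real m))\<^sup>2 \<le> V\<^sup>2" using V2 by (simp add: power_mult_distrib mult.commute)
  then have Vb: "V \<ge> c * sqrt (real m)"
    by (rule power2_le_imp_le) (simp add: V_def vn_nonneg)
  have "c * sqrt (real n) > 0" using cc n by simp
  then have Upos: "U > 0" using Ub by linarith
  have "c * sqrt (real m) > 0" using cc m by simp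
  then have Vpos: "V > 0" using Vb by linarith
  have UV: "U * V \<ge> c\<^sup>2 * sqrt (real n) * sqrt (real m)"
  proof -
    have "U * V \<ge> (c * sqrt (real n)) * (c * sqrt (real m))"
      using Ub Vb cc Upos Vpos by (intro mult_mono) auto
    then show ?thesis by (simp add: power2_eq_square mult_ac)
  qed
  have Wpos: "W X' > 0" for X'
  proof -
    have "\<exists>j<m. vhat X' j \<noteq> 0" using lead[rule_format, of X'] unfolding leading_right_sv_def by auto
    then have "vec_norm m (vhat X') \<noteq> 0" using vn_zero_iff[of m "vhat X'"] by auto
    then show ?thesis unfolding W_def using vn_nonneg[of m "vhat X'"] by linarith
  qed
  have \<delta>pos: "\<delta> > 0" unfolding \<delta>_def using eps c2 by simp
  have \<delta>small: "\<delta> \<le> 1 / 24"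
  proof -
    have "\<epsilon> * c\<^sup>2 \<le> 1" using eps cc c1 by (intro mult_le_one) (auto simp: power_le_one)
    then show ?thesis unfolding \<delta>_def by simp
  qed
  have Nrpos: "Nr > 0" unfolding Nr_def using n by simp
  have Kb: "of_int K \<ge> 1 / h + 1" unfolding K_def by linarith
  have Tpos: "T > 0" unfolding T_def using eps c2 n m by simp
  have Fbound: "\<forall>i<n. \<forall>j<m. \<bar>Fm X' i j\<bar> \<le> 1" for X'
  proof (intro allI impI)
    fix i j assume "i < n" "j < m"
    then have "u' i \<in> {c..C}" "v j \<in> {c..C}" using uu' vv by auto
    then have "u' i * v j \<ge> 0" "u' i * v j \<le> 1" using cc
      by (auto intro: mult_le_one)
    then show "\<bar>Fm X' i j\<bar> \<le> 1" unfolding Fm_def real_mat_def by auto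
  qed
  have cosb: "vec_inner m (vhat X') v \<ge> W X' * V * (1 - \<epsilon> / 2)" if G: "Good X'" for X'
  proof -
    define S where "S = \<epsilon> * U * V / 4"
    have netc: "\<forall>x'\<in>netset n h K. \<forall>y'\<in>netset m h K. vec_norm n x' \<le> 1 + \<delta> \<longrightarrow> vec_norm m y' \<le> 1 + \<delta> \<longrightarrow> \<bar>bil n m (Fm X') x' y'\<bar> \<le> T"
    proof (intro ballI impI)
      fix x' y' assume "x' \<in> netset n h K" "y' \<in> netset m h K" "vec_norm n x' \<le> 1 + \<delta>" "vec_norm m y' \<le> 1 + \<delta>"
      then have "(x', y') \<in> NN" unfolding NN_def by simp
      from bspec[OF G[unfolded Good_def] this] have "\<bar>bil n m (Fm X') x' y'\<bar> < T" by simp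
      then show "\<bar>bil n m (Fm X') x' y'\<bar> \<le> T" by simp
    qed
    have opb: "\<forall>x y. vec_norm n x \<le> 1 \<longrightarrow> vec_norm m y \<le> 1 \<longrightarrow> \<bar>bil n m (Fm X') x y\<bar> \<le> S"
    proof (intro allI impI)
      fix x y :: "nat \<Rightarrow> real" assume x: "vec_norm n x \<le> 1" and y: "vec_norm m y \<le> 1"
      have "\<bar>bil n m (Fm X') x y\<bar> \<le> T + 3 * \<delta> * sqrt (real n) * sqrt (real m)"
        by (rule op_bound[OF Fbound \<delta>pos _ h_def[unfolded Nr_def] _ _ _ Kb netc x y])
           (use \<delta>small n m in auto)
      also have "T + 3 * \<delta> * sqrt (real n) * sqrt (real m) = \<epsilon> / 4 * (c\<^sup>2 * sqrt (real n) * sqrt (real m))"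
        unfolding T_def \<delta>_def by (simp add: field_simps)
      also have "\<dots> \<le> \<epsilon> / 4 * (U * V)" using UV eps by (intro mult_left_mono) auto
      finally show "\<bar>bil n m (Fm X') x y\<bar> \<le> S" unfolding S_def by (simp add: mult_ac)
    qed
    have Fb: "\<forall>y. vec_norm n (mv m (\<lambda>i j. real_mat X' i j - u' i * v j) y) \<le> S * vec_norm m y"
      by (intro allI) (rule mv_norm_bound[OF opb, unfolded Fm_def])
    have "U * vec_inner m (vhat X') v \<ge> W X' * (U * V - 2 * S)"
      using det_cos[OF m Fb conjunct1[OF lead[rule_format, of X']] conjunct2[OF lead[rule_format, of X']]
          Upos[unfolded U_def] Vpos[unfolded V_def]] unfolding U_def V_def W_def .
    also have "W X' * (U * V - 2 * S) = U * (W X' * V * (1 - \<epsilon> / 2))"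
      unfolding S_def by (simp add: algebra_simps)
    finally show ?thesis using Upos by (simp add: mult_le_cancel_left_pos)
  qed
  have incl: "B \<subseteq> {p. \<not> Good (snd p)} \<union> Row"
  proof
    fix p assume pB: "p \<in> B"
    obtain X X' where p: "p = (X, X')" by (cases p) auto
    show "p \<in> {p. \<not> Good (snd p)} \<union> Row"
    proof (cases "Good X'")
      case False then show ?thesis using p by simp
    next
      case True
      have sumeq: "(\<Sum>j<m. real_mat X i j * vhat X' j) = R X X' + u i * vec_inner m (vhat X') v"
        unfolding R_def vec_inner_def
        by (simp add: algebra_simps sum_subtractf sum_distrib_left sum.distrib)
      have "\<bar>R X X'\<bar> \<ge> \<epsilon> * W X' * V / 2"
      proof (rule est_lemma[OF Wpos Vpos])
        show "vec_inner m (vhat X') v \<le> W X' * V"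
          unfolding W_def V_def by (rule vec_inner_cs)
        show "vec_inner m (vhat X') v \<ge> W X' * V * (1 - \<epsilon> / 2)" by (rule cosb[OF True])
        show "0 \<le> u i" "u i \<le> 1" using uu ii cc by auto
        show "\<epsilon> < \<bar>(R X X' + u i * vec_inner m (vhat X') v) / (W X' * V) - u i\<bar>"
          using pB unfolding p B_def W_def V_def sumeq[symmetric] by simp
      qed
      then show ?thesis using p unfolding Row_def by simp
    qed
  qed
  have Qform: "Q = Pi_pmf ({0..<n}\<times>{0..<m}) False (\<lambda>k. bernoulli_pmf ((\<lambda>(i, j). u' i * v j) k))"
    unfolding Q_def by (rule rank_one_alt)
  have Pform: "P = Pi_pmf ({0..<n}\<times>{0..<m}) False (\<lambda>k. bernoulli_pmf ((\<lambda>(i, j). u i * v j) k))"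
    unfolding P_def by (rule rank_one_alt)
  have qrange: "\<forall>k\<in>{0..<n}\<times>{0..<m}. (\<lambda>(i, j). w i * v j) k \<in> {0..1}"
    if "\<forall>k<n. w k \<in> {c..C}" for w
  proof
    fix k assume "k \<in> {0..<n}\<times>{0..<m}"
    then obtain a b where k: "k = (a, b)" "a < n" "b < m" by auto
    then have "w a \<in> {c..C}" "v b \<in> {c..C}" using that vv by auto
    then show "(\<lambda>(i, j). w i * v j) k \<in> {0..1}" using k cc by (auto intro: mult_le_one)
  qed
  have netprob: "measure_pmf.prob Q {X'. \<bar>bil n m (Fm X') (fst p) (snd p)\<bar> \<ge> T} \<le> 2 * exp (- T\<^sup>2)"
    if pN: "p \<in> NN" for p
  proof -
    obtain x' y' where p: "p = (x', y')" and nx: "vec_norm n x' \<le> 1 + \<delta>" and ny: "vec_norm m y' \<le> 1 + \<delta>"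
      using pN unfolding NN_def by auto
    define a where "a = (\<lambda>k. case k of (i, j) \<Rightarrow> x' i * y' j)"
    have bileq: "bil n m (Fm X') x' y' = (\<Sum>k\<in>{0..<n}\<times>{0..<m}. a k * (of_bool (X' k) - (\<lambda>(i, j). u' i * v j) k))" for X'
      unfolding sum_pairs a_def bil_def Fm_def real_mat_def by (simp add: mult_ac)
    have asum: "(\<Sum>k\<in>{0..<n}\<times>{0..<m}. (a k)\<^sup>2) \<le> 2"
    proof -
      have "(\<Sum>k\<in>{0..<n}\<times>{0..<m}. (a k)\<^sup>2) = (vec_norm n x')\<^sup>2 * (vec_norm m y')\<^sup>2"
        unfolding sum_pairs a_def vn_sq by (simp add: sum_product power_mult_distrib)
      also have "\<dots> \<le> (1 + \<delta>)\<^sup>2 * (1 + \<delta>)\<^sup>2"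
        using nx ny by (intro mult_mono power_mono) (auto simp: vn_nonneg)
      also have "\<dots> \<le> 2"
      proof -
        have "(1 + \<delta>)\<^sup>2 \<le> (1 + 1/24)\<^sup>2" using \<delta>small \<delta>pos by (intro power_mono) auto
        then have "(1 + \<delta>)\<^sup>2 * (1 + \<delta>)\<^sup>2 \<le> (1 + 1/24)\<^sup>2 * (1 + 1/24)\<^sup>2"
          by (intro mult_mono) auto
        moreover have "(1 + 1/24::real)\<^sup>2 * (1 + 1/24)\<^sup>2 = 390625 / 331776" by (simp add: power2_eq_square)
        ultimately show ?thesis by simp
      qed
      finally show ?thesis .
    qed
    have "measure_pmf.prob Q {X'. \<bar>bil n m (Fm X') x' y'\<bar> \<ge> T} \<le> 2 * exp (-2 * T\<^sup>2 / 2)"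
      unfolding Qform bileq
      by (rule hoeff_pi[OF _ qrange[OF uu'] Tpos _ asum]) auto
    then show ?thesis using p by simp
  qed
  have finNN: "finite NN" unfolding NN_def using netset_finite by auto
  have cardNN: "real (card NN) \<le> real (nat (2 * K + 1)) ^ (m + n)"
  proof -
    have "card NN \<le> card (netset n h K) * card (netset m h K)"
      unfolding NN_def card_cartesian_product
      by (intro mult_mono card_mono netset_finite) auto
    also have "\<dots> \<le> nat (2 * K + 1) ^ n * nat (2 * K + 1) ^ m"
      by (intro mult_mono netset_card) auto
    also have "\<dots> = nat (2 * K + 1) ^ (m + n)" by (simp add: power_add mult.commute)
    finally show ?thesis by (metis of_nat_le_iff of_nat_power)
  qed
  have badnet: "measure_pmf.prob Q {X'. \<not> Good X'} \<le> real (m + n) * E"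
  proof -
    have "{X'. \<not> Good X'} \<subseteq> (\<Union>p\<in>NN. {X'. \<bar>bil n m (Fm X') (fst p) (snd p)\<bar> \<ge> T})"
      unfolding Good_def by (auto simp: not_less)
    then have "measure_pmf.prob Q {X'. \<not> Good X'} \<le> measure_pmf.prob Q (\<Union>p\<in>NN. {X'. \<bar>bil n m (Fm X') (fst p) (snd p)\<bar> \<ge> T})"
      by (intro measure_pmf.finite_measure_mono) auto
    also have "\<dots> \<le> (\<Sum>p\<in>NN. measure_pmf.prob Q {X'. \<bar>bil n m (Fm X') (fst p) (snd p)\<bar> \<ge> T})"
      by (intro measure_pmf.finite_measure_subadditive_finite finNN) auto
    also have "\<dots> \<le> (\<Sum>p\<in>NN. 2 * exp (- T\<^sup>2))"
      by (intro sum_mono netprob)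
    also have "\<dots> = real (card NN) * (2 * exp (- T\<^sup>2))" by simp
    also have "\<dots> \<le> real (nat (2 * K + 1)) ^ (m + n) * (2 * exp (- T\<^sup>2))"
      by (intro mult_right_mono cardNN) auto
    also have "\<dots> \<le> real (m + n) * E"
      unfolding E_def
      by (rule numeric_net[OF cc(1) c1 n m eps hyp _ K_def T_def])
         (simp add: h_def \<delta>_def Nr_def)
    finally show ?thesis .
  qed
  have rowprob: "measure_pmf.prob P {X. (X, X') \<in> Row} \<le> 2 * E" for X'
  proof -
    define w where "w = vhat X'"
    define a where "a = (\<lambda>k. case k of (k1, j) \<Rightarrow> if k1 = i then w j else 0)"
    have Req: "R X X' = (\<Sum>k\<in>{0..<n}\<times>{0..<m}. a k * (of_bool (X k) - (\<lambda>(i, j). u i * v j) k))" for X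
    proof -
      have "(\<Sum>k\<in>{0..<n}\<times>{0..<m}. a k * (of_bool (X k) - (\<lambda>(i, j). u i * v j) k))
          = (\<Sum>k1<n. if k1 = i then (\<Sum>j<m. w j * (of_bool (X (i, j)) - u i * v j)) else 0)"
        unfolding sum_pairs a_def by (intro sum.cong) auto
      also have "\<dots> = (\<Sum>j<m. w j * (of_bool (X (i, j)) - u i * v j))"
        using ii by simp
      finally show ?thesis unfolding R_def w_def real_mat_def by (simp add: mult_ac)
    qed
    have asum: "(\<Sum>k\<in>{0..<n}\<times>{0..<m}. (a k)\<^sup>2) = (W X')\<^sup>2"
    proof -
      have "(\<Sum>k\<in>{0..<n}\<times>{0..<m}. (a k)\<^sup>2) = (\<Sum>k1<n. if k1 = i then (\<Sum>j<m. (w j)\<^sup>2) else 0)"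
        unfolding sum_pairs a_def by (intro sum.cong) auto
      also have "\<dots> = (\<Sum>j<m. (w j)\<^sup>2)" using ii by simp
      finally show ?thesis unfolding W_def vn_sq w_def .
    qed
    have tpos: "\<epsilon> * W X' * V / 2 > 0" using eps Wpos Vpos by simp
    have "measure_pmf.prob P {X. (X, X') \<in> Row}
          = measure_pmf.prob P {X. \<bar>\<Sum>k\<in>{0..<n}\<times>{0..<m}. a k * (of_bool (X k) - (\<lambda>(i, j). u i * v j) k)\<bar> \<ge> \<epsilon> * W X' * V / 2}"
      unfolding Row_def by (simp add: Req)
    also have "\<dots> \<le> 2 * exp (-2 * (\<epsilon> * W X' * V / 2)\<^sup>2 / (W X')\<^sup>2)"
      unfolding Pform
      by (rule hoeff_pi[OF _ qrange[OF uu] tpos _ asum[THEN eq_refl]]) (use Wpos[of X'] in auto)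
    also have "-2 * (\<epsilon> * W X' * V / 2)\<^sup>2 / (W X')\<^sup>2 = - (\<epsilon>\<^sup>2 * V\<^sup>2 / 2)"
      using Wpos[of X'] by (simp add: power2_eq_square field_simps)
    also have "exp (- (\<epsilon>\<^sup>2 * V\<^sup>2 / 2)) \<le> E"
    proof -
      have "const_C4 c * real (min m n) * \<epsilon>\<^sup>2 \<le> c\<^sup>2 / 18 * real m * \<epsilon>\<^sup>2"
        using C4_le[OF cc(1) c1] by (intro mult_right_mono mult_mono) auto
      also have "\<dots> \<le> \<epsilon>\<^sup>2 * V\<^sup>2 / 2"
      proof -
        have a: "real m * c\<^sup>2 * \<epsilon>\<^sup>2 \<le> V\<^sup>2 * \<epsilon>\<^sup>2" using mult_right_mono[OF V2, of "\<epsilon>\<^sup>2"] by simp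
        have b: "0 \<le> V\<^sup>2 * \<epsilon>\<^sup>2" by simp
        have e1: "c\<^sup>2 / 18 * real m * \<epsilon>\<^sup>2 = (real m * c\<^sup>2 * \<epsilon>\<^sup>2) / 18" by simp
        have e2: "\<epsilon>\<^sup>2 * V\<^sup>2 / 2 = (V\<^sup>2 * \<epsilon>\<^sup>2) / 2" by simp
        show ?thesis unfolding e1 e2 using a b by linarith
      qed
      finally show ?thesis unfolding E_def by simp
    qed
    finally show ?thesis by simp
  qed
  have rowpair: "measure_pmf.prob (pair_pmf P Q) Row \<le> 2 * E"
    by (rule pair_prob_bound) (rule rowprob)
  have netpair: "measure_pmf.prob (pair_pmf P Q) {p. \<not> Good (snd p)} = measure_pmf.prob Q {X'. \<not> Good X'}"
  proof -
    have "measure_pmf.prob Q {X'. \<not> Good X'} = measure_pmf.prob (map_pmf snd (pair_pmf P Q)) {X'. \<not> Good X'}"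
      by (simp add: map_snd_pair_pmf)
    also have "\<dots> = measure_pmf.prob (pair_pmf P Q) {p. \<not> Good (snd p)}"
      by (simp add: vimage_def)
    finally show ?thesis by simp
  qed
  have "measure_pmf.prob (pair_pmf P Q) B \<le> measure_pmf.prob (pair_pmf P Q) ({p. \<not> Good (snd p)} \<union> Row)"
    using incl by (intro measure_pmf.finite_measure_mono) auto
  also have "\<dots> \<le> measure_pmf.prob (pair_pmf P Q) {p. \<not> Good (snd p)} + measure_pmf.prob (pair_pmf P Q) Row"
    by (rule measure_Un_le) auto
  also have "\<dots> \<le> real (m + n) * E + 2 * E"
    using netpair badnet rowpair by linarith
  also have "\<dots> = real (m + n + 2) * E" by (simp add: algebra_simps)
  finally show ?thesis unfolding B_def P_def Q_def E_def .
qed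

end
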